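(* For every $\epsilon>0$ there exists a trigonometric polynomial $f$ on $\mathbb T^2$ such that $$\|P_xP_yf\|_1+\|(I-P_xP_y)f\|_1\le\epsilon\,|||f|||.$$
   Context: $\mathbb T=\mathbb R/2\pi\mathbb Z$ carries normalized Lebesgue measure, and points of $\mathbb T^2$ are written $(x,y)$. For $f\in L^2(\mathbb T^2)$ with Fourier coefficients $\hat f(m,n)$: - $P_x$ is the orthogonal projection onto $H^2_x=\{\hat f(m,n)=0 \text{ for } m<0\}$, and $P_{-x}=I-P_x$; - $P_y$ is the orthogonal projection onto $H^2_y=\{\hat f(m,n)=0 \text{ for } n<0\}$, and $P_{-y}=I-P_y$. For a trigonometric polynomial $f$ on $\mathbb T^2$ set $$|||f|||_{(x)}=\|P_xf\|_1+\|P_{-x}P_yf\|_1+\|P_{-x}P_{-y}f\|_1,\qquad |||f|||_{(y)}=\|P_yf\|_1+\|P_{-y}P_xf\|_1+\|P_{-y}P_{-x}f\|_1,$$ and $$|||f|||=\inf\{|||g|||_{(x)}+|||h|||_{(y)}: f=g+h,\ g,h \text{ trigonometric polynomials}\}.$$ *)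

theory Defs
  imports "HOL-Analysis.Analysis"
begin

text \<open>A trigonometric polynomial on the 2-torus is represented by its
  Fourier coefficient function (finitely supported).\<close>

type_synonym tpoly = "int \<times> int \<Rightarrow> complex"

definition trig_poly :: "tpoly \<Rightarrow> bool" where
  "trig_poly c \<longleftrightarrow> finite {k. c k \<noteq> 0}"

definition tp_eval :: "tpoly \<Rightarrow> real \<times> real \<Rightarrow> complex" where
  "tp_eval c p = (\<Sum>k\<in>{k. c k \<noteq> 0}.
     c k * exp (\<i> * of_real (of_int (fst k) * fst p + of_int (snd k) * snd p)))"

definition L1norm :: "tpoly \<Rightarrow> real" where
  "L1norm c = integral (cbox (0,0) (2*pi, 2*pi)) (\<lambda>p. norm (tp_eval c p)) / (4 * pi\<^sup>2)"

definition Px :: "tpoly \<Rightarrow> tpoly" where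
  "Px c = (\<lambda>(m,n). if m \<ge> 0 then c (m,n) else 0)"
definition Pmx :: "tpoly \<Rightarrow> tpoly" where
  "Pmx c = (\<lambda>(m,n). if m < 0 then c (m,n) else 0)"
definition Py :: "tpoly \<Rightarrow> tpoly" where
  "Py c = (\<lambda>(m,n). if n \<ge> 0 then c (m,n) else 0)"
definition Pmy :: "tpoly \<Rightarrow> tpoly" where
  "Pmy c = (\<lambda>(m,n). if n < 0 then c (m,n) else 0)"

definition norm_x :: "tpoly \<Rightarrow> real" where
  "norm_x f = L1norm (Px f) + L1norm (Pmx (Py f)) + L1norm (Pmx (Pmy f))"

definition norm_y :: "tpoly \<Rightarrow> real" where
  "norm_y f = L1norm (Py f) + L1norm (Pmy (Px f)) + L1norm (Pmy (Pmx f))"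

definition triple_norm :: "tpoly \<Rightarrow> real" where
  "triple_norm f = Inf {norm_x g + norm_y h | g h.
      trig_poly g \<and> trig_poly h \<and> f = (\<lambda>k. g k + h k)}"

end

theory Submission
  imports Defs
begin

lemma sin_mult_bound: "\<bar>sin (real n * x)\<bar> \<le> real n * \<bar>sin x\<bar>"
proof (induction n)
  case 0 then show ?case by simp
next
  case (Suc n)
  have "sin (real (Suc n) * x) = sin (real n * x) * cos x + cos (real n * x) * sin x"
    by (simp add: distrib_right sin_add)
  also have "\<bar>\<dots>\<bar> \<le> \<bar>sin (real n * x)\<bar> * \<bar>cos x\<bar> + \<bar>cos (real n * x)\<bar> * \<bar>sin x\<bar>"
    by (metis abs_mult abs_triangle_ineq)
  also have "\<dots> \<le> \<bar>sin (real n * x)\<bar> + \<bar>sin x\<bar>"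
  proof -
    have "\<bar>sin (real n * x)\<bar> * \<bar>cos x\<bar> \<le> \<bar>sin (real n * x)\<bar>"
      by (rule mult_left_le) (auto simp: abs_cos_le_one)
    moreover have "\<bar>cos (real n * x)\<bar> * \<bar>sin x\<bar> \<le> \<bar>sin x\<bar>"
      by (rule mult_left_le_one_le) (auto simp: abs_cos_le_one)
    ultimately show ?thesis by linarith
  qed
  also have "\<dots> \<le> real (Suc n) * \<bar>sin x\<bar>" using Suc by (simp add: algebra_simps)
  finally show ?case .
qed

lemma abel_aux:
  fixes c :: "nat \<Rightarrow> real"
  assumes c: "\<And>j. \<bar>c j\<bar> \<le> 1" and a: "a \<ge> 1" and N: "N \<ge> a"
  shows "\<bar>(\<Sum>j\<in>{a..N}. (c (j-1) - c j) / real j) + c N / real N\<bar> \<le> 2 / real a - 1 / real N"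
  using N
proof (induction N rule: dec_induct)
  case base
  have "\<bar>c (a-1) / real a\<bar> \<le> 1 / real a" using c[of "a-1"] a
    by (simp add: abs_div divide_right_mono)
  moreover have "(c (a-1) - c a) / real a + c a / real a = c (a-1) / real a"
    by (simp add: diff_divide_distrib)
  ultimately show ?case by simp
next
  case (step n)
  have n1: "real n \<ge> 1" using step a by simp
  have "(\<Sum>j\<in>{a..Suc n}. (c (j-1) - c j) / real j) + c (Suc n) / real (Suc n)
      = ((\<Sum>j\<in>{a..n}. (c (j-1) - c j) / real j) + c n / real n) + c n * (1 / real (Suc n) - 1 / real n)"
  proof -
    have sp: "(\<Sum>j\<in>{a..Suc n}. (c (j-1) - c j) / real j) = (\<Sum>j\<in>{a..n}. (c (j-1) - c j) / real j) + (c n - c (Suc n)) / real (Suc n)"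
      using step.hyps by simp
    have alg: "(S::real) + (x - y) / m1 + y / m1 = (S + x / m) + x * (1 / m1 - 1 / m)" for S x y m m1
      by (simp add: diff_divide_distrib right_diff_distrib)
    show ?thesis unfolding sp by (rule alg)
  qed
  also have "\<bar>\<dots>\<bar> \<le> (2 / real a - 1 / real n) + (1 / real n - 1 / real (Suc n))"
  proof -
    have d: "1 / real n - 1 / real (Suc n) \<ge> 0" using n1 by (simp add: field_simps)
    have "\<bar>c n * (1 / real (Suc n) - 1 / real n)\<bar> = \<bar>c n\<bar> * (1 / real n - 1 / real (Suc n))"
      using d by (simp add: abs_mult)
    also have "\<dots> \<le> 1 / real n - 1 / real (Suc n)" using c[of n] d by (simp add: mult_left_le_one_le)
    finally show ?thesis using step.IH abs_triangle_ineq by (smt (verit))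
  qed
  finally show ?case by simp
qed

lemma abel:
  fixes c :: "nat \<Rightarrow> real"
  assumes c: "\<And>j. \<bar>c j\<bar> \<le> 1" and a: "a \<ge> 1"
  shows "\<bar>\<Sum>j\<in>{a..N}. (c (j-1) - c j) / real j\<bar> \<le> 2 / real a"
proof (cases "N \<ge> a")
  case True
  have N1: "real N \<ge> 1" using True a by simp
  have "\<bar>c N / real N\<bar> \<le> 1 / real N" using c[of N] N1 by (simp add: abs_div divide_right_mono)
  then show ?thesis using abel_aux[where c=c, OF c a True] by (smt (verit))
next
  case False then show ?thesis by simp
qed

lemma sin_sum_tail:
  fixes t :: real
  assumes a: "a \<ge> 1" and s: "sin (t/2) \<noteq> 0"
  shows "\<bar>\<Sum>j\<in>{a..N}. sin (real j * t) / real j\<bar> \<le> 1 / (real a * \<bar>sin (t/2)\<bar>)"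
proof -
  define c where "c j = cos ((real j + 1/2) * t)" for j :: nat
  have key: "2 * sin (t/2) * sin (real j * t) = c (j-1) - c j" if "j \<ge> 1" for j
  proof -
    have "c (j-1) - c j = cos ((real j - 1/2) * t) - cos ((real j + 1/2) * t)"
      using that by (simp add: c_def of_nat_diff algebra_simps)
    also have "\<dots> = 2 * sin (real j * t) * sin (t/2)"
      by (subst cos_diff_cos) (simp add: algebra_simps add_divide_distrib)
    finally show ?thesis by simp
  qed
  have "2 * sin (t/2) * (\<Sum>j\<in>{a..N}. sin (real j * t) / real j) = (\<Sum>j\<in>{a..N}. (c (j-1) - c j) / real j)"
    unfolding sum_distrib_left
  proof (intro sum.cong refl)
    fix j assume "j \<in> {a..N}"
    then have j: "j \<ge> 1" using a by simp
    then show "2 * sin (t/2) * (sin (real j * t) / real j) = (c (j-1) - c j) / real j"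
      using key[OF j] by (simp add: field_simps)
  qed
  also have "\<bar>\<dots>\<bar> \<le> 2 / real a" using a by (intro abel) (auto simp: c_def)
  finally have "2 * \<bar>sin (t/2)\<bar> * \<bar>\<Sum>j\<in>{a..N}. sin (real j * t) / real j\<bar> \<le> 2 / real a"
    by (simp add: abs_mult)
  then show ?thesis using s a by (simp add: field_simps)
qed

lemma sin_sum_bound:
  fixes t :: real
  shows "\<bar>\<Sum>j\<in>{1..N}. sin (real j * t) / real j\<bar> \<le> 3"
proof (cases "sin (t/2) = 0")
  case True
  have "sin (real j * t) = 0" for j
  proof -
    have "\<bar>sin (real (2*j) * (t/2))\<bar> \<le> real (2*j) * \<bar>sin (t/2)\<bar>" by (rule sin_mult_bound)
    then show ?thesis using True by simp
  qed
  then show ?thesis by simp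
next
  case False
  define s where "s = \<bar>sin (t/2)\<bar>"
  have s0: "s > 0" using False by (simp add: s_def)
  define m where "m = min N (nat \<lfloor>1/s\<rfloor>)"
  have ms: "real m * s \<le> 1"
  proof -
    have "real (nat \<lfloor>1/s\<rfloor>) \<le> 1/s" using s0 by (simp add: of_nat_nat)
    then have "real m \<le> 1/s" unfolding m_def by (meson min.cobounded2 of_nat_le_iff order.trans)
    then show ?thesis using s0 by (simp add: field_simps)
  qed
  have split: "{1..N} = {1..m} \<union> {m+1..N}" by (auto simp: m_def)
  have "(\<Sum>j\<in>{1..N}. sin (real j * t) / real j) = (\<Sum>j\<in>{1..m}. sin (real j * t) / real j) + (\<Sum>j\<in>{m+1..N}. sin (real j * t) / real j)"
    unfolding split by (rule sum.union_disjoint) auto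
  moreover have "\<bar>\<Sum>j\<in>{1..m}. sin (real j * t) / real j\<bar> \<le> 2"
  proof -
    have "\<bar>\<Sum>j\<in>{1..m}. sin (real j * t) / real j\<bar> \<le> (\<Sum>j\<in>{1..m}. \<bar>sin (real j * t) / real j\<bar>)"
      by (rule sum_abs)
    also have "\<dots> \<le> (\<Sum>j\<in>{1..m}. 2 * s)"
    proof (intro sum_mono)
      fix j assume j: "j \<in> {1..m}"
      have "\<bar>sin (real (2*j) * (t/2))\<bar> \<le> real (2*j) * s" unfolding s_def by (rule sin_mult_bound)
      then have "\<bar>sin (real j * t)\<bar> \<le> real j * (2 * s)" by (simp add: algebra_simps)
      then show "\<bar>sin (real j * t) / real j\<bar> \<le> 2 * s" using j by (simp add: abs_div field_simps)
    qed
    also have "\<dots> = 2 * (real m * s)" by simp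
    also have "\<dots> \<le> 2" using ms by simp
    finally show ?thesis .
  qed
  moreover have "\<bar>\<Sum>j\<in>{m+1..N}. sin (real j * t) / real j\<bar> \<le> 1"
  proof (cases "m < N")
    case True
    then have "m = nat \<lfloor>1/s\<rfloor>" by (simp add: m_def)
    then have "real (m+1) > 1/s" by linarith
    then have gt: "real (m+1) * s > 1" using s0 by (simp add: field_simps)
    have "\<bar>\<Sum>j\<in>{m+1..N}. sin (real j * t) / real j\<bar> \<le> 1 / (real (m+1) * s)"
      unfolding s_def by (rule sin_sum_tail) (use False in auto)
    also have "\<dots> \<le> 1" using gt by simp
    finally show ?thesis .
  next
    case False then show ?thesis by simp
  qed
  ultimately show ?thesis by linarith
qed

definition E :: "int \<times> int \<Rightarrow> real \<times> real \<Rightarrow> complex" where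
  "E k p = exp (\<i> * of_real (of_int (fst k) * fst p + of_int (snd k) * snd p))"

abbreviation "BOX \<equiv> cbox (0::real,0::real) (2*pi, 2*pi)"

lemma tp_eval_sub:
  assumes "finite S" "{k. c k \<noteq> 0} \<subseteq> S"
  shows "tp_eval c p = (\<Sum>k\<in>S. c k * E k p)"
  unfolding tp_eval_def E_def
  by (rule sum.mono_neutral_left) (use assms in auto)

lemma cont_E: "continuous_on A (E k)"
  unfolding E_def by (intro continuous_intros)

lemma cont_tp: "continuous_on A (tp_eval c)"
proof -
  have "tp_eval c = (\<lambda>p. \<Sum>k\<in>{k. c k \<noteq> 0}. c k * E k p)"
    by (auto simp: tp_eval_def E_def fun_eq_iff)
  then show ?thesis by (simp add: continuous_on_sum continuous_on_mult cont_E)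
qed

lemma int1: "integral {0..2*pi} (\<lambda>x. exp (\<i> * of_real (of_int m * x))) = (if m = 0 then 2*pi else 0)"
proof (cases "m = 0")
  case True then show ?thesis by (simp add: scaleR_conv_of_real)
next
  case False
  have a: "\<i> * of_int m \<noteq> (0::complex)" using False by simp
  have "integral {0..2*pi} (\<lambda>x. exp ((\<i> * of_int m) * complex_of_real x))
      = (exp ((\<i> * of_int m) * of_real (2*pi)) - 1) / (\<i> * of_int m)"
    by (rule integral_exp) (use a in auto)
  moreover have "exp ((\<i> * of_int m) * of_real (2*pi)) = 1"
  proof -
    have "(\<i> * of_int m) * of_real (2*pi) = \<i> * (of_int m * (of_real pi * 2))" by (simp add: algebra_simps)
    then show ?thesis by (simp only: exp_2pi_1_int)
  qed
  moreover have "(\<lambda>x. exp (\<i> * of_real (of_int m * x))) = (\<lambda>x. exp ((\<i> * of_int m) * complex_of_real x))"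
    by (auto simp: fun_eq_iff algebra_simps)
  ultimately show ?thesis using False by simp
qed

lemma intE: "integral BOX (E k) = (if k = (0,0) then of_real (4*pi\<^sup>2) else 0)"
proof -
  obtain m n where k: "k = (m,n)" by fastforce
  have sep: "E k (x,y) = exp (\<i> * of_real (of_int m * x)) * exp (\<i> * of_real (of_int n * y))" for x y
    by (simp add: E_def k exp_add[symmetric] algebra_simps)
  have "integral BOX (E k) = integral (cbox 0 (2*pi)) (\<lambda>x. integral (cbox 0 (2*pi)) (\<lambda>y. E k (x,y)))"
    by (rule integral_prod_continuous) (rule cont_E)
  also have "\<dots> = integral {0..2*pi} (\<lambda>x. exp (\<i> * of_real (of_int m * x)) * integral {0..2*pi} (\<lambda>y. exp (\<i> * of_real (of_int n * y))))"
    by (simp add: sep)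
  also have "\<dots> = integral {0..2*pi} (\<lambda>x. exp (\<i> * of_real (of_int m * x))) * integral {0..2*pi} (\<lambda>y. exp (\<i> * of_real (of_int n * y)))"
    by (rule integral_mult_left)
  also have "\<dots> = complex_of_real (if m = 0 then 2*pi else 0) * complex_of_real (if n = 0 then 2*pi else 0)"
    by (simp only: int1)
  also have "\<dots> = (if k = (0,0) then of_real (4*pi\<^sup>2) else 0)"
    by (cases "m = 0"; cases "n = 0") (simp_all add: k power2_eq_square)
  finally show ?thesis .
qed

lemma integrable_BOX: fixes f :: "real \<times> real \<Rightarrow> complex" shows "continuous_on BOX f \<Longrightarrow> f integrable_on BOX"
  by (rule integrable_continuous)

lemma integral_sum_E:
  assumes "finite S"
  shows "integral BOX (\<lambda>p. \<Sum>k\<in>S. c k * E k p) = of_real (4*pi\<^sup>2) * (\<Sum>k\<in>S. if k = (0,0) then c k else 0)"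
proof -
  have "integral BOX (\<lambda>p. \<Sum>k\<in>S. c k * E k p) = (\<Sum>k\<in>S. integral BOX (\<lambda>p. c k * E k p))"
    by (rule integral_sum) (auto intro!: integrable_BOX continuous_intros cont_E simp: assms)
  also have "\<dots> = (\<Sum>k\<in>S. c k * integral BOX (E k))"
    by (simp add: integral_mult_right)
  also have "\<dots> = (\<Sum>k\<in>S. c k * (if k = (0,0) then of_real (4*pi\<^sup>2) else 0))"
    by (simp only: intE)
  also have "\<dots> = of_real (4*pi\<^sup>2) * (\<Sum>k\<in>S. if k = (0,0) then c k else 0)"
    unfolding sum_distrib_left by (intro sum.cong refl) auto
  finally show ?thesis .
qed

abbreviation supp :: "tpoly \<Rightarrow> (int \<times> int) set" where "supp c \<equiv> {k. c k \<noteq> 0}"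

lemma E_mult: "E k p * E j p = E (fst k + fst j, snd k + snd j) p"
  by (simp add: E_def exp_add[symmetric] algebra_simps)

lemma integral_sum_E_gen:
  assumes "finite I"
  shows "integral BOX (\<lambda>p. \<Sum>i\<in>I. d i * E (\<phi> i) p) = of_real (4*pi\<^sup>2) * (\<Sum>i\<in>I. if \<phi> i = (0,0) then d i else 0)"
proof -
  have "integral BOX (\<lambda>p. \<Sum>i\<in>I. d i * E (\<phi> i) p) = (\<Sum>i\<in>I. integral BOX (\<lambda>p. d i * E (\<phi> i) p))"
    by (rule integral_sum) (auto intro!: integrable_BOX continuous_intros cont_E simp: assms)
  also have "\<dots> = (\<Sum>i\<in>I. d i * integral BOX (E (\<phi> i)))"
    by (simp add: integral_mult_right)
  also have "\<dots> = (\<Sum>i\<in>I. d i * (if \<phi> i = (0,0) then of_real (4*pi\<^sup>2) else 0))"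
    by (simp only: intE)
  also have "\<dots> = of_real (4*pi\<^sup>2) * (\<Sum>i\<in>I. if \<phi> i = (0,0) then d i else 0)"
    unfolding sum_distrib_left by (intro sum.cong refl) auto
  finally show ?thesis .
qed

lemma int_tp:
  assumes "trig_poly c"
  shows "integral BOX (tp_eval c) = of_real (4*pi\<^sup>2) * c (0,0)"
proof -
  have f: "finite (supp c \<union> {(0,0)})" using assms unfolding trig_poly_def by simp
  have "tp_eval c p = (\<Sum>k\<in>supp c \<union> {(0,0)}. c k * E (id k) p)" for p
    using tp_eval_sub[OF f, of c p] by auto
  then have "tp_eval c = (\<lambda>p. \<Sum>k\<in>supp c \<union> {(0,0)}. c k * E (id k) p)" by auto
  then have "integral BOX (tp_eval c) = of_real (4*pi\<^sup>2) * (\<Sum>k\<in>supp c \<union> {(0,0)}. if id k = (0,0) then c k else 0)"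
    using integral_sum_E_gen[OF f] by simp
  also have "(\<Sum>k\<in>supp c \<union> {(0,0)}. if id k = (0,0) then c k else 0) = c (0,0)"
    using f by (simp add: sum.delta)
  finally show ?thesis .
qed

lemma tp_cont_BOX: "continuous_on S (\<lambda>p. norm (tp_eval c p))"
  by (intro continuous_intros cont_tp)

lemma L1_nonneg: "L1norm c \<ge> 0"
  unfolding L1norm_def
  by (intro divide_nonneg_nonneg integral_nonneg integrable_continuous) (auto intro!: continuous_intros cont_tp)

lemma norm_integrable: "(\<lambda>p. norm (tp_eval c p)) integrable_on BOX"
  by (intro integrable_continuous) (auto intro!: continuous_intros cont_tp)

lemma tp_integrable: "tp_eval c integrable_on BOX"
  by (intro integrable_BOX cont_tp)

lemma pairing:
  assumes u: "trig_poly u" and a: "trig_poly a"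
  shows "integral BOX (\<lambda>p. tp_eval u p * tp_eval a p) = of_real (4*pi\<^sup>2) * (\<Sum>k\<in>supp u. u k * a (- fst k, - snd k))"
proof -
  have fu: "finite (supp u)" and fa: "finite (supp a)" using u a by (auto simp: trig_poly_def)
  define I where "I = supp u \<times> supp a"
  have fI: "finite I" using fu fa by (simp add: I_def)
  have prod: "tp_eval u p * tp_eval a p = (\<Sum>i\<in>I. (u (fst i) * a (snd i)) * E (fst (fst i) + fst (snd i), snd (fst i) + snd (snd i)) p)" for p
  proof -
    have "tp_eval u p * tp_eval a p = (\<Sum>k\<in>supp u. \<Sum>j\<in>supp a. (u k * E k p) * (a j * E j p))"
      by (simp add: tp_eval_sub[OF fu] tp_eval_sub[OF fa] sum_product)
    also have "\<dots> = (\<Sum>k\<in>supp u. \<Sum>j\<in>supp a. (u k * a j) * E (fst k + fst j, snd k + snd j) p)"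
      by (intro sum.cong refl) (simp add: E_mult[symmetric] algebra_simps)
    also have "\<dots> = (\<Sum>i\<in>I. (u (fst i) * a (snd i)) * E (fst (fst i) + fst (snd i), snd (fst i) + snd (snd i)) p)"
      unfolding I_def by (simp add: sum.cartesian_product case_prod_beta)
    finally show ?thesis .
  qed
  have "integral BOX (\<lambda>p. tp_eval u p * tp_eval a p) = of_real (4*pi\<^sup>2) *
     (\<Sum>i\<in>I. if (fst (fst i) + fst (snd i), snd (fst i) + snd (snd i)) = (0,0) then u (fst i) * a (snd i) else 0)"
    unfolding prod by (rule integral_sum_E_gen[OF fI])
  also have "(\<Sum>i\<in>I. if (fst (fst i) + fst (snd i), snd (fst i) + snd (snd i)) = (0,0) then u (fst i) * a (snd i) else 0)
     = (\<Sum>k\<in>supp u. \<Sum>j\<in>supp a. if j = (- fst k, - snd k) then u k * a j else 0)"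
    unfolding I_def sum.cartesian_product
    by (rule sum.cong) (auto simp: prod_eq_iff split: prod.splits)
  also have "\<dots> = (\<Sum>k\<in>supp u. u k * a (- fst k, - snd k))"
  proof (intro sum.cong refl)
    fix k
    show "(\<Sum>j\<in>supp a. if j = (- fst k, - snd k) then u k * a j else 0) = u k * a (- fst k, - snd k)"
      using fa by (cases "a (- fst k, - snd k) = 0") (simp_all add: sum.delta')
  qed
  finally show ?thesis .
qed

lemma duality:
  assumes u: "trig_poly u" and a: "trig_poly a" and M: "\<And>p. norm (tp_eval a p) \<le> M"
  shows "norm (\<Sum>k\<in>supp u. u k * a (- fst k, - snd k)) \<le> M * L1norm u"
proof -
  have pi: "4*pi\<^sup>2 > 0" by simp
  have "4*pi\<^sup>2 * norm (\<Sum>k\<in>supp u. u k * a (- fst k, - snd k)) = norm (integral BOX (\<lambda>p. tp_eval u p * tp_eval a p))"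
    by (simp add: pairing[OF u a] norm_mult norm_power)
  also have "\<dots> \<le> integral BOX (\<lambda>p. M * norm (tp_eval u p))"
  proof (rule integral_norm_bound_integral)
    show "(\<lambda>p. tp_eval u p * tp_eval a p) integrable_on BOX"
      by (intro integrable_BOX continuous_intros cont_tp)
    show "(\<lambda>p. M * norm (tp_eval u p)) integrable_on BOX"
      by (intro integrable_continuous) (auto intro!: continuous_intros cont_tp)
    fix p
    have "norm (tp_eval u p * tp_eval a p) = norm (tp_eval a p) * norm (tp_eval u p)" by (simp add: norm_mult)
    also have "\<dots> \<le> M * norm (tp_eval u p)" by (intro mult_right_mono M) simp
    finally show "norm (tp_eval u p * tp_eval a p) \<le> M * norm (tp_eval u p)" .
  qed
  also have "\<dots> = M * (4*pi\<^sup>2 * L1norm u)"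
    using pi by (simp add: L1norm_def)
  finally show ?thesis using pi by (simp add: algebra_simps)
qed

lemma tp_eval_diff:
  assumes "trig_poly u" "trig_poly v"
  shows "tp_eval (\<lambda>k. u k - v k) p = tp_eval u p - tp_eval v p"
proof -
  have f: "finite (supp u \<union> supp v)" using assms by (simp add: trig_poly_def)
  show ?thesis
    by (subst (1 2 3) tp_eval_sub[OF f]) (auto simp: sum_subtractf algebra_simps)
qed

lemma L1_diff:
  assumes "trig_poly u" "trig_poly v"
  shows "L1norm (\<lambda>k. u k - v k) \<le> L1norm u + L1norm v"
proof -
  have "integral BOX (\<lambda>p. norm (tp_eval (\<lambda>k. u k - v k) p)) \<le> integral BOX (\<lambda>p. norm (tp_eval u p) + norm (tp_eval v p))"
    by (intro integral_le norm_integrable integral_add integrable_add)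
       (auto simp: tp_eval_diff[OF assms] norm_triangle_ineq4)
  also have "\<dots> = integral BOX (\<lambda>p. norm (tp_eval u p)) + integral BOX (\<lambda>p. norm (tp_eval v p))"
    by (intro integral_add norm_integrable)
  finally show ?thesis unfolding L1norm_def add_divide_distrib[symmetric] by (rule divide_right_mono) simp
qed

lemma L1_delta: "L1norm (\<lambda>k. if k = (0,0) then c else 0) = norm c"
proof -
  have "tp_eval (\<lambda>k. if k = (0,0) then c else 0) p = c" for p
    by (subst tp_eval_sub[where S="{(0,0)}"]) (auto simp: E_def)
  then show ?thesis by (simp add: L1norm_def power2_eq_square content_Pair)
qed

definition aN :: "nat \<Rightarrow> tpoly" where
  "aN N = (\<lambda>(m,n). if n = -m \<and> m \<noteq> 0 \<and> \<bar>m\<bar> \<le> int N then - 1 / of_int m else 0)"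

definition Wp :: "nat \<Rightarrow> (int \<times> int) set" where "Wp N = (\<lambda>j. (int j, - int j)) ` {1..N}"
definition Wn :: "nat \<Rightarrow> (int \<times> int) set" where "Wn N = (\<lambda>j. (- int j, int j)) ` {1..N}"

lemma W_finite: "finite (Wp N)" "finite (Wn N)" by (auto simp: Wp_def Wn_def)
lemma W_disj: "Wp N \<inter> Wn N = {}" by (auto simp: Wp_def Wn_def)

lemma in_W: assumes "n = -m" "m \<noteq> 0" "\<bar>m\<bar> \<le> int N" shows "(m,n) \<in> Wp N \<union> Wn N"
proof (cases "m > 0")
  case True
  then have "(m,n) = (\<lambda>j. (int j, - int j)) (nat m)" "nat m \<in> {1..N}" using assms by auto
  then show ?thesis unfolding Wp_def by blast
next
  case False
  then have "(m,n) = (\<lambda>j. (- int j, int j)) (nat (-m))" "nat (-m) \<in> {1..N}" using assms by auto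
  then show ?thesis unfolding Wn_def by blast
qed

lemma supp_a: "supp (aN N) \<subseteq> Wp N \<union> Wn N"
proof
  fix k assume k: "k \<in> supp (aN N)"
  obtain m n where kk: "k = (m,n)" by fastforce
  have "aN N (m,n) \<noteq> 0" using k kk by simp
  then have "n = -m" "m \<noteq> 0" "\<bar>m\<bar> \<le> int N" unfolding aN_def by (simp_all split: if_splits)
  then show "k \<in> Wp N \<union> Wn N" using in_W kk by blast
qed

lemma trig_a: "trig_poly (aN N)"
  unfolding trig_poly_def using supp_a W_finite by (meson finite_Un finite_subset)

lemma exp_sin: "exp (- (\<i> * complex_of_real t)) - exp (\<i> * complex_of_real t) = - 2 * \<i> * complex_of_real (sin t)"
proof -
  have "exp (- (\<i> * complex_of_real t)) = cis (-t)" by (simp add: cis_conv_exp)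
  moreover have "exp (\<i> * complex_of_real t) = cis t" by (simp add: cis_conv_exp)
  ultimately show ?thesis by (simp add: complex_eq_iff)
qed

lemma tp_eval_a: "tp_eval (aN N) p = - 2 * \<i> * of_real (\<Sum>j\<in>{1..N}. sin (real j * (fst p - snd p)) / real j)"
proof -
  obtain x y where p: "p = (x,y)" by fastforce
  have "tp_eval (aN N) p = (\<Sum>k\<in>Wp N \<union> Wn N. aN N k * E k p)"
    by (rule tp_eval_sub) (use supp_a W_finite in auto)
  also have "\<dots> = (\<Sum>k\<in>Wp N. aN N k * E k p) + (\<Sum>k\<in>Wn N. aN N k * E k p)"
    by (rule sum.union_disjoint) (use W_finite W_disj in auto)
  also have "(\<Sum>k\<in>Wp N. aN N k * E k p) = (\<Sum>j\<in>{1..N}. - exp (\<i> * of_real (real j * (x - y))) / of_nat j)"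
    unfolding Wp_def
    by (subst sum.reindex) (auto simp: inj_on_def aN_def E_def p algebra_simps intro!: sum.cong)
  also have "(\<Sum>k\<in>Wn N. aN N k * E k p) = (\<Sum>j\<in>{1..N}. exp (- (\<i> * of_real (real j * (x - y)))) / of_nat j)"
    unfolding Wn_def
    by (subst sum.reindex) (auto simp: inj_on_def aN_def E_def p algebra_simps intro!: sum.cong)
  also have "(\<Sum>j\<in>{1..N}. - exp (\<i> * of_real (real j * (x - y))) / of_nat j) + (\<Sum>j\<in>{1..N}. exp (- (\<i> * of_real (real j * (x - y)))) / of_nat j)
     = (\<Sum>j\<in>{1..N}. (exp (- (\<i> * of_real (real j * (x - y)))) - exp (\<i> * of_real (real j * (x - y)))) / of_nat j)"
    by (simp add: sum.distrib[symmetric] diff_divide_distrib)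
  also have "\<dots> = (\<Sum>j\<in>{1..N}. - 2 * \<i> * of_real (sin (real j * (x - y)) / real j))"
    by (intro sum.cong refl) (simp only: exp_sin, simp)
  also have "\<dots> = - 2 * \<i> * of_real (\<Sum>j\<in>{1..N}. sin (real j * (fst p - snd p)) / real j)"
    by (simp add: sum_distrib_left p)
  finally show ?thesis .
qed

lemma norm_a: "norm (tp_eval (aN N) p) \<le> 6"
proof -
  have "norm (tp_eval (aN N) p) = 2 * \<bar>\<Sum>j\<in>{1..N}. sin (real j * (fst p - snd p)) / real j\<bar>"
    unfolding tp_eval_a norm_mult norm_of_real by simp
  also have "\<dots> \<le> 6" using sin_sum_bound[where N=N and t="fst p - snd p"] by simp
  finally show ?thesis .
qed

lemma pair_a:
  assumes u: "trig_poly u"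
  shows "(\<Sum>k\<in>supp u. u k * aN N (- fst k, - snd k)) = (\<Sum>j\<in>{1..N}. (u (int j, - int j) - u (- int j, int j)) / of_nat j)"
proof -
  have fu: "finite (supp u)" using u by (simp add: trig_poly_def)
  have fW: "finite (Wp N \<union> Wn N)" using W_finite by simp
  have "(\<Sum>k\<in>supp u. u k * aN N (- fst k, - snd k)) = (\<Sum>k\<in>supp u \<union> (Wp N \<union> Wn N). u k * aN N (- fst k, - snd k))"
    by (rule sum.mono_neutral_left) (use fu fW in auto)
  also have "\<dots> = (\<Sum>k\<in>Wp N \<union> Wn N. u k * aN N (- fst k, - snd k))"
  proof (rule sum.mono_neutral_right)
    show "\<forall>k\<in>supp u \<union> (Wp N \<union> Wn N) - (Wp N \<union> Wn N). u k * aN N (- fst k, - snd k) = 0"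
    proof
      fix k assume k: "k \<in> supp u \<union> (Wp N \<union> Wn N) - (Wp N \<union> Wn N)"
      obtain m n where kk: "k = (m,n)" by fastforce
      have "aN N (-m, -n) = 0"
      proof (rule ccontr)
        assume "aN N (-m, -n) \<noteq> 0"
        then have "n = -m" "m \<noteq> 0" "\<bar>m\<bar> \<le> int N" unfolding aN_def by (simp_all split: if_splits)
        then show False using in_W k kk by blast
      qed
      then show "u k * aN N (- fst k, - snd k) = 0" by (simp add: kk)
    qed
  qed (use fu fW in auto)
  also have "\<dots> = (\<Sum>k\<in>Wp N. u k * aN N (- fst k, - snd k)) + (\<Sum>k\<in>Wn N. u k * aN N (- fst k, - snd k))"
    by (rule sum.union_disjoint) (use W_finite W_disj in auto)
  also have "(\<Sum>k\<in>Wp N. u k * aN N (- fst k, - snd k)) = (\<Sum>j\<in>{1..N}. u (int j, - int j) / of_nat j)"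
    unfolding Wp_def
    by (subst sum.reindex) (auto simp: inj_on_def aN_def intro!: sum.cong)
  also have "(\<Sum>k\<in>Wn N. u k * aN N (- fst k, - snd k)) = (\<Sum>j\<in>{1..N}. - u (- int j, int j) / of_nat j)"
    unfolding Wn_def
    by (subst sum.reindex) (auto simp: inj_on_def aN_def intro!: sum.cong)
  finally show ?thesis by (simp add: sum.distrib[symmetric] diff_divide_distrib)
qed

definition T :: "nat \<Rightarrow> tpoly \<Rightarrow> complex" where
  "T N u = (\<Sum>j\<in>{1..N}. (u (int j, - int j) + u (- int j, int j)) / of_nat j)"

lemma T_A:
  assumes u: "trig_poly u" and z: "\<And>j. j \<in> {1..N} \<Longrightarrow> u (- int j, int j) = 0"
  shows "norm (T N u) \<le> 6 * L1norm u"
proof -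
  have "T N u = (\<Sum>k\<in>supp u. u k * aN N (- fst k, - snd k))"
    unfolding pair_a[OF u] T_def by (intro sum.cong refl) (simp add: z)
  then show ?thesis using duality[OF u trig_a norm_a] by simp
qed

lemma T_B:
  assumes u: "trig_poly u" and z: "\<And>j. j \<in> {1..N} \<Longrightarrow> u (int j, - int j) = 0"
  shows "norm (T N u) \<le> 6 * L1norm u"
proof -
  have "T N u = - (\<Sum>k\<in>supp u. u k * aN N (- fst k, - snd k))"
    unfolding pair_a[OF u] T_def sum_negf[symmetric] by (intro sum.cong refl) (simp add: z)
  then have "norm (T N u) = norm (\<Sum>k\<in>supp u. u k * aN N (- fst k, - snd k))" by simp
  then show ?thesis using duality[OF u trig_a norm_a] by simp
qed

definition fr :: "nat \<Rightarrow> int \<times> int \<Rightarrow> real" where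
  "fr N k = (1 / real (N+1)) * (\<Sum>j\<in>{0..N}. \<Sum>l\<in>{0..N}. if k = (int j - int l, int l - int j) then 1 else 0)"

definition fN :: "nat \<Rightarrow> tpoly" where "fN N k = complex_of_real (fr N k)"

definition DS :: "nat \<Rightarrow> (int \<times> int) set" where
  "DS N = (\<lambda>(j,l). (int j - int l, int l - int j)) ` ({0..N} \<times> {0..N})"

lemma DS_finite: "finite (DS N)" by (simp add: DS_def)

lemma fr_nonneg: "fr N k \<ge> 0"
  unfolding fr_def by (intro mult_nonneg_nonneg sum_nonneg) auto

lemma supp_f: "supp (fN N) \<subseteq> DS N"
proof
  fix k assume k: "k \<in> supp (fN N)"
  show "k \<in> DS N"
  proof (rule ccontr)
    assume "k \<notin> DS N"
    moreover have "k \<in> DS N" if "j \<in> {0..N}" "l \<in> {0..N}" "k = (int j - int l, int l - int j)" for j l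
      using that unfolding DS_def by (auto intro!: image_eqI[where x="(j,l)"])
    ultimately have "\<And>j l. j \<in> {0..N} \<Longrightarrow> l \<in> {0..N} \<Longrightarrow> k \<noteq> (int j - int l, int l - int j)"
      by blast
    then have "fr N k = 0" unfolding fr_def by simp
    then show False using k by (simp add: fN_def)
  qed
qed

lemma trig_f: "trig_poly (fN N)"
  unfolding trig_poly_def using supp_f DS_finite by (meson finite_subset)

lemma f00: "fN N (0,0) = 1"
proof -
  have "(\<Sum>l\<in>{0..N}. if ((0::int),(0::int)) = (int j - int l, int l - int j) then 1 else (0::real)) = 1" if "j \<in> {0..N}" for j
  proof -
    have "(\<Sum>l\<in>{0..N}. if ((0::int),(0::int)) = (int j - int l, int l - int j) then 1 else (0::real))
        = (\<Sum>l\<in>{0..N}. if l = j then 1 else 0)" by (intro sum.cong refl) auto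
    then show ?thesis using that by simp
  qed
  then have "(\<Sum>j\<in>{0..N}. \<Sum>l\<in>{0..N}. if ((0::int),(0::int)) = (int j - int l, int l - int j) then 1 else (0::real)) = real (N+1)"
    by simp
  then show ?thesis by (simp add: fN_def fr_def)
qed

lemma f_off: "fN N (m,n) \<noteq> 0 \<Longrightarrow> n = -m"
  using supp_f[of N] by (auto simp: DS_def)

lemma tp_eval_f: "tp_eval (fN N) p = complex_of_real ((1 / real (N+1)) * (norm (\<Sum>j\<in>{0..N}. exp (\<i> * of_real (real j * (fst p - snd p)))))\<^sup>2)"
proof -
  obtain x y where p: "p = (x,y)" by fastforce
  define z where "z j = exp (\<i> * of_real (real j * (x - y)))" for j :: nat
  define \<phi> where "\<phi> = (\<lambda>(j::nat,l::nat). (int j - int l, int l - int j))"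
  have phi: "\<phi> (j,l) \<in> DS N" if "j \<in> {0..N}" "l \<in> {0..N}" for j l
    using that unfolding DS_def \<phi>_def by blast
  have "tp_eval (fN N) p = (\<Sum>k\<in>DS N. fN N k * E k p)"
    by (rule tp_eval_sub) (use supp_f DS_finite in auto)
  also have "\<dots> = (\<Sum>k\<in>DS N. of_real (1 / real (N+1)) * (\<Sum>j\<in>{0..N}. \<Sum>l\<in>{0..N}. if k = \<phi> (j,l) then E k p else 0))"
  proof (intro sum.cong refl)
    fix k
    have "complex_of_real (\<Sum>j\<in>{0..N}. \<Sum>l\<in>{0..N}. if k = (int j - int l, int l - int j) then 1 else 0) * E k p
        = (\<Sum>j\<in>{0..N}. \<Sum>l\<in>{0..N}. if k = \<phi> (j,l) then E k p else 0)"
      unfolding of_real_sum sum_distrib_right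
      by (intro sum.cong refl, rename_tac j l, case_tac "k = \<phi> (j,l)") (simp_all add: \<phi>_def)
    then show "fN N k * E k p = of_real (1 / real (N+1)) * (\<Sum>j\<in>{0..N}. \<Sum>l\<in>{0..N}. if k = \<phi> (j,l) then E k p else 0)"
      by (simp add: fN_def fr_def mult.assoc)
  qed
  also have "\<dots> = of_real (1 / real (N+1)) * (\<Sum>j\<in>{0..N}. \<Sum>l\<in>{0..N}. \<Sum>k\<in>DS N. if k = \<phi> (j,l) then E k p else 0)"
    unfolding sum_distrib_left[symmetric]
    by (subst sum.swap, rule arg_cong[where f="\<lambda>x. _ * x"], rule sum.cong[OF refl], rule sum.swap)
  also have "\<dots> = of_real (1 / real (N+1)) * (\<Sum>j\<in>{0..N}. \<Sum>l\<in>{0..N}. E (\<phi> (j,l)) p)"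
    using phi DS_finite by (simp add: sum.delta')
  also have "\<dots> = of_real (1 / real (N+1)) * (\<Sum>j\<in>{0..N}. \<Sum>l\<in>{0..N}. z j * cnj (z l))"
  proof -
    have "E (\<phi> (j,l)) p = z j * cnj (z l)" for j l
    proof -
      have "cnj (z l) = exp (- (\<i> * of_real (real l * (x - y))))" by (simp add: z_def exp_cnj)
      then show ?thesis
        by (simp add: z_def E_def \<phi>_def p exp_add[symmetric] algebra_simps)
    qed
    then show ?thesis by simp
  qed
  also have "(\<Sum>j\<in>{0..N}. \<Sum>l\<in>{0..N}. z j * cnj (z l)) = (\<Sum>j\<in>{0..N}. z j) * cnj (\<Sum>l\<in>{0..N}. z l)"
    by (simp add: sum_product cnj_sum)
  also have "\<dots> = of_real ((norm (\<Sum>j\<in>{0..N}. z j))\<^sup>2)"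
    by (rule complex_norm_square[symmetric])
  finally show ?thesis by (simp add: z_def p)
qed

lemma L1_f: "L1norm (fN N) = 1"
proof -
  define r where "r p = norm (tp_eval (fN N) p)" for p
  have tr: "tp_eval (fN N) p = complex_of_real (r p)" for p
  proof -
    let ?X = "(1 / real (N+1)) * (norm (\<Sum>j\<in>{0..N}. exp (\<i> * of_real (real j * (fst p - snd p)))))\<^sup>2"
    have e: "tp_eval (fN N) p = of_real ?X" by (rule tp_eval_f)
    have "?X \<ge> 0" by simp
    then have "r p = ?X" unfolding r_def e norm_of_real by simp
    then show ?thesis using e by simp
  qed
  have ri: "r integrable_on BOX" unfolding r_def[abs_def] by (rule norm_integrable)
  have "((\<lambda>p. complex_of_real (r p)) has_integral of_real (integral BOX r)) BOX"
    by (rule has_integral_of_real[OF integrable_integral[OF ri]])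
  then have "integral BOX (tp_eval (fN N)) = of_real (integral BOX r)"
    unfolding tr by (rule integral_unique)
  then have "of_real (integral BOX r) = complex_of_real (4*pi\<^sup>2)"
    using int_tp[OF trig_f, of N] f00 by simp
  then have "integral BOX r = 4*pi\<^sup>2" using of_real_eq_iff by blast
  then show ?thesis unfolding L1norm_def r_def[symmetric] by simp
qed

lemma PxPy_f: "Px (Py (fN N)) = (\<lambda>k. if k = (0,0) then 1 else 0)"
proof
  fix k :: "int \<times> int"
  obtain m n where k: "k = (m,n)" by fastforce
  show "Px (Py (fN N)) k = (if k = (0,0) then 1 else 0)"
  proof (cases "fN N (m,n) = 0")
    case True
    then show ?thesis using f00[of N] by (auto simp: k Px_def Py_def)
  next
    case False
    then have "n = -m" by (rule f_off)
    then show ?thesis using f00[of N] by (auto simp: k Px_def Py_def)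
  qed
qed

lemma LHS_f: "L1norm (Px (Py (fN N))) + L1norm (\<lambda>k. fN N k - Px (Py (fN N)) k) \<le> 3"
proof -
  have td: "trig_poly (\<lambda>k. if k = (0,0) then (1::complex) else 0)"
    unfolding trig_poly_def by (rule finite_subset[of _ "{(0,0)}"]) auto
  have "L1norm (\<lambda>k. fN N k - Px (Py (fN N)) k) \<le> L1norm (fN N) + L1norm (Px (Py (fN N)))"
    unfolding PxPy_f by (rule L1_diff[OF trig_f td])
  then show ?thesis unfolding PxPy_f L1_delta L1_f by simp
qed

lemma trig_Px: "trig_poly c \<Longrightarrow> trig_poly (Px c)"
  unfolding trig_poly_def by (rule finite_subset[of _ "{k. c k \<noteq> 0}"]) (auto simp: Px_def split: if_splits)
lemma trig_Pmx: "trig_poly c \<Longrightarrow> trig_poly (Pmx c)"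
  unfolding trig_poly_def by (rule finite_subset[of _ "{k. c k \<noteq> 0}"]) (auto simp: Pmx_def split: if_splits)
lemma trig_Py: "trig_poly c \<Longrightarrow> trig_poly (Py c)"
  unfolding trig_poly_def by (rule finite_subset[of _ "{k. c k \<noteq> 0}"]) (auto simp: Py_def split: if_splits)
lemma trig_Pmy: "trig_poly c \<Longrightarrow> trig_poly (Pmy c)"
  unfolding trig_poly_def by (rule finite_subset[of _ "{k. c k \<noteq> 0}"]) (auto simp: Pmy_def split: if_splits)

lemma T_add: "T N (\<lambda>k. g k + h k) = T N g + T N h"
  unfolding T_def by (simp add: sum.distrib[symmetric] add_divide_distrib algebra_simps)

lemma T_g:
  assumes g: "trig_poly g"
  shows "norm (T N g) \<le> 6 * norm_x g"
proof -
  have "T N g = T N (Px g) + T N (Pmx (Py g))"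
    unfolding T_def sum.distrib[symmetric]
    by (intro sum.cong refl) (auto simp: Px_def Pmx_def Py_def add_divide_distrib)
  also have "norm \<dots> \<le> norm (T N (Px g)) + norm (T N (Pmx (Py g)))" by (rule norm_triangle_ineq)
  also have "\<dots> \<le> 6 * L1norm (Px g) + 6 * L1norm (Pmx (Py g))"
    by (intro add_mono T_A T_B trig_Px trig_Pmx trig_Py g) (auto simp: Px_def Pmx_def Py_def)
  also have "\<dots> \<le> 6 * norm_x g"
    using L1_nonneg[of "Pmx (Pmy g)"] by (simp add: norm_x_def)
  finally show ?thesis .
qed

lemma T_h:
  assumes h: "trig_poly h"
  shows "norm (T N h) \<le> 6 * norm_y h"
proof -
  have "T N h = T N (Py h) + T N (Pmy (Px h))"
    unfolding T_def sum.distrib[symmetric]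
    by (intro sum.cong refl) (auto simp: Px_def Pmy_def Py_def add_divide_distrib)
  also have "norm \<dots> \<le> norm (T N (Py h)) + norm (T N (Pmy (Px h)))" by (rule norm_triangle_ineq)
  also have "\<dots> \<le> 6 * L1norm (Py h) + 6 * L1norm (Pmy (Px h))"
    by (intro add_mono T_A T_B trig_Px trig_Pmy trig_Py h) (auto simp: Px_def Pmy_def Py_def)
  also have "\<dots> \<le> 6 * norm_y h"
    using L1_nonneg[of "Pmy (Pmx h)"] by (simp add: norm_y_def)
  finally show ?thesis .
qed

lemma triple_lower:
  assumes f: "trig_poly f"
  shows "norm (T N f) / 6 \<le> triple_norm f"
  unfolding triple_norm_def
proof (rule cInf_greatest)
  have "trig_poly (\<lambda>_. 0)" by (simp add: trig_poly_def)
  then have "norm_x f + norm_y (\<lambda>_. 0) \<in> {norm_x g + norm_y h |g h. trig_poly g \<and> trig_poly h \<and> f = (\<lambda>k. g k + h k)}"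
    using f by (intro CollectI exI[where x=f] exI[where x="\<lambda>_. 0"]) simp
  then show "{norm_x g + norm_y h |g h. trig_poly g \<and> trig_poly h \<and> f = (\<lambda>k. g k + h k)} \<noteq> {}"
    by blast
next
  fix x assume "x \<in> {norm_x g + norm_y h |g h. trig_poly g \<and> trig_poly h \<and> f = (\<lambda>k. g k + h k)}"
  then obtain g h where gh: "trig_poly g" "trig_poly h" "f = (\<lambda>k. g k + h k)" and x: "x = norm_x g + norm_y h"
    by blast
  have "norm (T N f) \<le> norm (T N g) + norm (T N h)" unfolding gh(3) T_add by (rule norm_triangle_ineq)
  also have "\<dots> \<le> 6 * x" using T_g[OF gh(1), of N] T_h[OF gh(2), of N] x by simp
  finally show "norm (T N f) / 6 \<le> x" by simp
qed

lemma T_f_lower: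
  assumes N: "N = 2 * M"
  shows "norm (T N (fN N)) \<ge> harm M / 2"
proof -
  define R where "R = (\<Sum>d\<in>{1..N}. (fr N (int d, - int d) + fr N (- int d, int d)) / real d)"
  have TR: "T N (fN N) = of_real R"
    unfolding T_def R_def fN_def by (simp add: of_real_sum)
  have R0: "R \<ge> (\<Sum>d\<in>{1..N}. fr N (- int d, int d) / real d)"
    unfolding R_def by (intro sum_mono divide_right_mono) (auto simp: fr_nonneg)
  define Q where "Q = (\<Sum>d\<in>{1..N}. \<Sum>j\<in>{0..N}. \<Sum>l\<in>{0..N}. if (- int d, int d) = (int j - int l, int l - int j) then 1 / real d else 0)"
  have RQ0: "(\<Sum>d\<in>{1..N}. fr N (- int d, int d) / real d) = (\<Sum>d\<in>{1..N}. (1 / real (N+1)) * (\<Sum>j\<in>{0..N}. \<Sum>l\<in>{0..N}. if (- int d, int d) = (int j - int l, int l - int j) then 1 / real d else 0))"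
  proof (intro sum.cong refl)
    fix d :: nat
    have "(\<Sum>j\<in>{0..N}. \<Sum>l\<in>{0..N}. if (- int d, int d) = (int j - int l, int l - int j) then 1 else (0::real)) / real d
       = (\<Sum>j\<in>{0..N}. \<Sum>l\<in>{0..N}. if (- int d, int d) = (int j - int l, int l - int j) then 1 / real d else 0)"
      unfolding sum_divide_distrib by (intro sum.cong refl, rename_tac j l, case_tac "(- int d, int d) = (int j - int l, int l - int j)") simp_all
    then show "fr N (- int d, int d) / real d = 1 / real (N + 1) * (\<Sum>j\<in>{0..N}. \<Sum>l\<in>{0..N}. if (- int d, int d) = (int j - int l, int l - int j) then 1 / real d else 0)"
      by (simp only: fr_def times_divide_eq_right[symmetric])
  qed
  have RQ: "(\<Sum>d\<in>{1..N}. fr N (- int d, int d) / real d) = (1 / real (N+1)) * Q"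
    unfolding RQ0 Q_def by (rule sum_distrib_left[symmetric])
  define G where "G d j = (\<Sum>l\<in>{0..N}. if (- int d, int d) = (int j - int l, int l - int j) then 1 / real d else (0::real))" for d j
  have G0: "G d j \<ge> 0" for d j unfolding G_def by (intro sum_nonneg) auto
  have "real (M+1) * harm M = (\<Sum>d\<in>{1..M}. \<Sum>j\<in>{0..M}. 1 / real d)"
    by (simp add: harm_def sum_distrib_left divide_inverse)
  also have "\<dots> = (\<Sum>d\<in>{1..M}. \<Sum>j\<in>{0..M}. G d j)"
  proof (intro sum.cong refl)
    fix d j assume d: "d \<in> {1..M}" and j: "j \<in> {0..M}"
    have "G d j = (\<Sum>l\<in>{0..N}. if l = j + d then 1 / real d else 0)"
      unfolding G_def by (intro sum.cong refl) auto
    also have "\<dots> = 1 / real d" using d j N by (simp add: sum.delta')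
    finally show "1 / real d = G d j" by simp
  qed
  also have "\<dots> \<le> (\<Sum>d\<in>{1..M}. \<Sum>j\<in>{0..N}. G d j)"
    by (intro sum_mono sum_mono2) (auto simp: N G0)
  also have "\<dots> \<le> (\<Sum>d\<in>{1..N}. \<Sum>j\<in>{0..N}. G d j)"
    by (rule sum_mono2) (auto simp: N G0 intro!: sum_nonneg)
  also have "\<dots> = Q" unfolding Q_def G_def by simp
  finally have Qb: "real (M+1) * harm M \<le> Q" .
  have h0: "harm M \<ge> (0::real)" by (rule harm_nonneg)
  have "harm M / 2 \<le> (1 / real (N+1)) * (real (M+1) * harm M)"
  proof -
    have "harm M * real (2*M+1) \<le> 2 * (real (M+1) * harm M)" using h0 by (simp add: algebra_simps)
    then show ?thesis using N by (simp add: field_simps)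
  qed
  also have "\<dots> \<le> (1 / real (N+1)) * Q" using Qb by (intro mult_left_mono) auto
  also have "\<dots> \<le> R" using R0 RQ by simp
  also have "R = norm (T N (fN N))"
  proof -
    have Q0: "0 \<le> Q" using Qb h0 by (meson mult_nonneg_nonneg of_nat_0_le_iff order_trans)
    have "0 \<le> (1 / real (N+1)) * Q" using Q0 by simp
    then have "0 \<le> R" using R0 RQ by linarith
    then show ?thesis by (simp add: TR)
  qed
  finally show ?thesis .
qed

theorem mainTheorem3:
  fixes \<epsilon> :: real
  assumes "\<epsilon> > 0"
  shows "\<exists>f. trig_poly f \<and> f \<noteq> (\<lambda>_. 0) \<and>
           L1norm (Px (Py f)) + L1norm (\<lambda>k. f k - Px (Py f) k) \<le> \<epsilon> * triple_norm f"
proof -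
  define M where "M = nat \<lceil>exp (36 / \<epsilon>)\<rceil>"
  define N where "N = 2 * M"
  have eM: "exp (36 / \<epsilon>) \<le> real M + 1" unfolding M_def by linarith
  have "36 / \<epsilon> = ln (exp (36 / \<epsilon>))" by simp
  also have "\<dots> \<le> ln (real M + 1)" using eM by (subst ln_le_cancel_iff) auto
  also have "\<dots> \<le> harm M" by (rule ln_le_harm)
  finally have hM: "36 / \<epsilon> \<le> harm M" .
  have "3 / \<epsilon> \<le> harm M / 12" using hM by (simp add: field_simps)
  also have "\<dots> \<le> norm (T N (fN N)) / 6" using T_f_lower[OF N_def] by simp
  also have "\<dots> \<le> triple_norm (fN N)" by (rule triple_lower[OF trig_f])
  finally have tn: "3 / \<epsilon> \<le> triple_norm (fN N)" .
  have "L1norm (Px (Py (fN N))) + L1norm (\<lambda>k. fN N k - Px (Py (fN N)) k) \<le> 3" by (rule LHS_f)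
  also have "3 = \<epsilon> * (3 / \<epsilon>)" using assms by simp
  also have "\<dots> \<le> \<epsilon> * triple_norm (fN N)" using tn assms by (intro mult_left_mono) auto
  finally have "L1norm (Px (Py (fN N))) + L1norm (\<lambda>k. fN N k - Px (Py (fN N)) k) \<le> \<epsilon> * triple_norm (fN N)" .
  moreover have "fN N \<noteq> (\<lambda>_. 0)"
  proof
    assume "fN N = (\<lambda>_. 0)"
    then have "fN N (0,0) = 0" by simp
    then show False using f00 by simp
  qed
  ultimately show ?thesis using trig_f by blast
qed

end
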